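(* Let $A$ be a finite subset of an abelian group $\mathbf G$, and let $n,m\ge1$ be integers. Then $$D_n(A)|A|^m\le D_{n+m}(A)\le D_n(A)D_m(A),$$ $$S_n(A)|A|^m\le S_{n+m}(A)\le S_n(A)\cdot\min\{S_m(A),D_m(A)\}.$$ Moreover, if $m\ge2$ then $D_n(A)|A|^m\le S_{n+m}(A)$, and if $m=1$ and $n\ge2$ then $D_{n-1}(A)|A|^2\le S_{n+1}(A)$.
   Context: For an integer $k\ge1$, $D_k(A)=|A^k-\Delta(A)|$ and $S_k(A)=|A^k+\Delta(A)|$, where $A^k\subseteq\mathbf G^k$ is the Cartesian power, $\Delta(A)=\{(a,\dots,a)\in\mathbf G^k:a\in A\}$, and sums/differences of subsets of $\mathbf G^k$ are taken coordinatewise, e.g. $A^k-\Delta(A)=\{(a_1-a,\dots,a_k-a):a,a_1,\dots,a_k\in A\}$. *)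

theory Defs
  imports Main
begin

text \<open>Elements of G^k are represented as lists of length k over G.\<close>

definition cart_pow :: "'a set \<Rightarrow> nat \<Rightarrow> 'a list set" where
  "cart_pow A k = {xs. length xs = k \<and> set xs \<subseteq> A}"

definition diag :: "'a set \<Rightarrow> nat \<Rightarrow> 'a list set" where
  "diag A k = {replicate k a | a. a \<in> A}"

definition vplus :: "'a::ab_group_add list set \<Rightarrow> 'a list set \<Rightarrow> 'a list set" where
  "vplus X Y = {map2 (+) xs ys | xs ys. xs \<in> X \<and> ys \<in> Y}"

definition vminus :: "'a::ab_group_add list set \<Rightarrow> 'a list set \<Rightarrow> 'a list set" where
  "vminus X Y = {map2 (-) xs ys | xs ys. xs \<in> X \<and> ys \<in> Y}"

definition Dk :: "nat \<Rightarrow> 'a::ab_group_add set \<Rightarrow> nat" where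
  "Dk k A = card (vminus (cart_pow A k) (diag A k))"

definition Sk :: "nat \<Rightarrow> 'a::ab_group_add set \<Rightarrow> nat" where
  "Sk k A = card (vplus (cart_pow A k) (diag A k))"

end

theory Submission
  imports Defs
begin

lemma map2_repl: "length bs = k \<Longrightarrow> map2 f bs (replicate k a) = map (\<lambda>b. f b a) bs"
  by (induction bs arbitrary: k) auto

definition DSet :: "'a::ab_group_add set \<Rightarrow> nat \<Rightarrow> 'a list set" where
  "DSet A k = {xs. length xs = k \<and> (\<exists>a\<in>A. \<forall>v\<in>set xs. v + a \<in> A)}"

definition SSet :: "'a::ab_group_add set \<Rightarrow> nat \<Rightarrow> 'a list set" where
  "SSet A k = {xs. length xs = k \<and> (\<exists>a\<in>A. \<forall>v\<in>set xs. v - a \<in> A)}"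

lemma Dk_eq: "Dk k A = card (DSet A k)"
proof -
  have "vminus (cart_pow A k) (diag A k) = DSet A k"
  proof (rule set_eqI, rule iffI)
    fix xs assume "xs \<in> vminus (cart_pow A k) (diag A k)"
    then obtain bs a where bs: "length bs = k" "set bs \<subseteq> A" "a \<in> A"
      and xs: "xs = map2 (-) bs (replicate k a)"
      unfolding vminus_def cart_pow_def diag_def by auto
    then have "xs = map (\<lambda>b. b - a) bs" using map2_repl by metis
    then show "xs \<in> DSet A k" using bs unfolding DSet_def by (intro CollectI conjI bexI[of _ a]) auto
  next
    fix xs assume "xs \<in> DSet A k"
    then obtain a where a: "length xs = k" "a \<in> A" "\<forall>v\<in>set xs. v + a \<in> A"
      unfolding DSet_def by auto
    have "xs = map2 (-) (map (\<lambda>v. v + a) xs) (replicate k a)"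
      using a map2_repl[of "map (\<lambda>v. v + a) xs" k "(-)" a] by (simp add: comp_def)
    moreover have "map (\<lambda>v. v + a) xs \<in> cart_pow A k" using a unfolding cart_pow_def by auto
    moreover have "replicate k a \<in> diag A k" using a unfolding diag_def by auto
    ultimately show "xs \<in> vminus (cart_pow A k) (diag A k)" unfolding vminus_def by blast
  qed
  then show ?thesis unfolding Dk_def by simp
qed

lemma Sk_eq: "Sk k A = card (SSet A k)"
proof -
  have "vplus (cart_pow A k) (diag A k) = SSet A k"
  proof (rule set_eqI, rule iffI)
    fix xs assume "xs \<in> vplus (cart_pow A k) (diag A k)"
    then obtain bs a where bs: "length bs = k" "set bs \<subseteq> A" "a \<in> A"
      and xs: "xs = map2 (+) bs (replicate k a)"
      unfolding vplus_def cart_pow_def diag_def by auto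
    then have "xs = map (\<lambda>b. b + a) bs" using map2_repl by metis
    then show "xs \<in> SSet A k" using bs unfolding SSet_def by (intro CollectI conjI bexI[of _ a]) auto
  next
    fix xs assume "xs \<in> SSet A k"
    then obtain a where a: "length xs = k" "a \<in> A" "\<forall>v\<in>set xs. v - a \<in> A"
      unfolding SSet_def by auto
    have "xs = map2 (+) (map (\<lambda>v. v - a) xs) (replicate k a)"
      using a map2_repl[of "map (\<lambda>v. v - a) xs" k "(+)" a] by (simp add: comp_def)
    moreover have "map (\<lambda>v. v - a) xs \<in> cart_pow A k" using a unfolding cart_pow_def by auto
    moreover have "replicate k a \<in> diag A k" using a unfolding diag_def by auto
    ultimately show "xs \<in> vplus (cart_pow A k) (diag A k)" unfolding vplus_def by blast
  qed
  then show ?thesis unfolding Sk_def by simp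
qed

lemma finite_DSet: "finite A \<Longrightarrow> finite (DSet A k)"
proof -
  assume f: "finite A"
  have "DSet A k \<subseteq> {xs. set xs \<subseteq> (\<lambda>(b,a). b - a) ` (A \<times> A) \<and> length xs = k}"
  proof
    fix xs assume "xs \<in> DSet A k"
    then obtain a where a: "length xs = k" "a \<in> A" "\<forall>v\<in>set xs. v + a \<in> A"
      unfolding DSet_def by auto
    have "\<forall>v\<in>set xs. v \<in> (\<lambda>(b,a). b - a) ` (A \<times> A)"
    proof
      fix v assume "v \<in> set xs"
      then have "(v + a, a) \<in> A \<times> A" using a by auto
      then show "v \<in> (\<lambda>(b,a). b - a) ` (A \<times> A)" by force
    qed
    then show "xs \<in> {xs. set xs \<subseteq> (\<lambda>(b,a). b - a) ` (A \<times> A) \<and> length xs = k}" using a by auto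
  qed
  then show ?thesis by (rule finite_subset) (use f finite_lists_length_eq[of "(\<lambda>(b,a). b - a) ` (A \<times> A)" k] in auto)
qed

lemma finite_SSet: "finite A \<Longrightarrow> finite (SSet A k)"
proof -
  assume f: "finite A"
  have "SSet A k \<subseteq> {xs. set xs \<subseteq> (\<lambda>(b,a). b + a) ` (A \<times> A) \<and> length xs = k}"
  proof
    fix xs assume "xs \<in> SSet A k"
    then obtain a where a: "length xs = k" "a \<in> A" "\<forall>v\<in>set xs. v - a \<in> A"
      unfolding SSet_def by auto
    have "\<forall>v\<in>set xs. v \<in> (\<lambda>(b,a). b + a) ` (A \<times> A)"
    proof
      fix v assume "v \<in> set xs"
      then have "(v - a, a) \<in> A \<times> A" using a by auto
      then show "v \<in> (\<lambda>(b,a). b + a) ` (A \<times> A)" by force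
    qed
    then show "xs \<in> {xs. set xs \<subseteq> (\<lambda>(b,a). b + a) ` (A \<times> A) \<and> length xs = k}" using a by auto
  qed
  then show ?thesis by (rule finite_subset) (use f finite_lists_length_eq[of "(\<lambda>(b,a). b + a) ` (A \<times> A)" k] in auto)
qed

definition CP :: "'a set \<Rightarrow> nat \<Rightarrow> 'a list set" where
  "CP A k = {xs. set xs \<subseteq> A \<and> length xs = k}"

lemma card_CP: "finite A \<Longrightarrow> card (CP A k) = card A ^ k"
  unfolding CP_def by (rule card_lists_length_eq)

definition ad :: "'a::ab_group_add set \<Rightarrow> 'a list \<Rightarrow> 'a" where
  "ad A x = (SOME a. a \<in> A \<and> (\<forall>v\<in>set x. v + a \<in> A))"

definition sd :: "'a::ab_group_add set \<Rightarrow> 'a list \<Rightarrow> 'a" where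
  "sd A x = (SOME a. a \<in> A \<and> (\<forall>v\<in>set x. v - a \<in> A))"

lemma ad_prop: "x \<in> DSet A k \<Longrightarrow> ad A x \<in> A \<and> (\<forall>v\<in>set x. v + ad A x \<in> A)"
  unfolding ad_def DSet_def by (rule someI_ex) auto

lemma sd_prop: "x \<in> SSet A k \<Longrightarrow> sd A x \<in> A \<and> (\<forall>v\<in>set x. v - sd A x \<in> A)"
  unfolding sd_def SSet_def by (rule someI_ex) auto

lemma D_lower: assumes "finite A" shows "Dk n A * card A ^ m \<le> Dk (n + m) A"
proof -
  let ?f = "\<lambda>(x, ys). x @ map (\<lambda>b. b - ad A x) ys"
  let ?g = "\<lambda>w. (take n w, map (\<lambda>v. v + ad A (take n w)) (drop n w))"
  have inj: "inj_on ?f (DSet A n \<times> CP A m)"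
  proof (rule inj_on_inverseI[where g = ?g])
    fix p assume "p \<in> DSet A n \<times> CP A m"
    then obtain x ys where p: "p = (x, ys)" "length x = n" unfolding DSet_def by auto
    show "?g (?f p) = p" using p by (simp add: comp_def)
  qed
  have sub: "?f ` (DSet A n \<times> CP A m) \<subseteq> DSet A (n + m)"
  proof
    fix w assume "w \<in> ?f ` (DSet A n \<times> CP A m)"
    then obtain x ys where x: "x \<in> DSet A n" and ys: "ys \<in> CP A m"
      and w: "w = x @ map (\<lambda>b. b - ad A x) ys" by auto
    have "length w = n + m" using x ys w unfolding DSet_def CP_def by auto
    moreover have "\<forall>v\<in>set w. v + ad A x \<in> A" using ad_prop[OF x] ys w unfolding CP_def by auto
    ultimately show "w \<in> DSet A (n + m)" using ad_prop[OF x] unfolding DSet_def by blast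
  qed
  have "Dk n A * card A ^ m = card (DSet A n \<times> CP A m)"
    by (simp add: Dk_eq card_cartesian_product card_CP assms)
  also have "\<dots> = card (?f ` (DSet A n \<times> CP A m))" using card_image[OF inj] by simp
  also have "\<dots> \<le> card (DSet A (n + m))" by (rule card_mono[OF finite_DSet[OF assms] sub])
  finally show ?thesis by (simp add: Dk_eq)
qed

lemma S_lower: assumes "finite A" shows "Sk n A * card A ^ m \<le> Sk (n + m) A"
proof -
  let ?f = "\<lambda>(x, ys). x @ map (\<lambda>b. b + sd A x) ys"
  let ?g = "\<lambda>w. (take n w, map (\<lambda>v. v - sd A (take n w)) (drop n w))"
  have inj: "inj_on ?f (SSet A n \<times> CP A m)"
  proof (rule inj_on_inverseI[where g = ?g])
    fix p assume "p \<in> SSet A n \<times> CP A m"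
    then obtain x ys where p: "p = (x, ys)" "length x = n" unfolding SSet_def by auto
    show "?g (?f p) = p" using p by (simp add: comp_def)
  qed
  have sub: "?f ` (SSet A n \<times> CP A m) \<subseteq> SSet A (n + m)"
  proof
    fix w assume "w \<in> ?f ` (SSet A n \<times> CP A m)"
    then obtain x ys where x: "x \<in> SSet A n" and ys: "ys \<in> CP A m"
      and w: "w = x @ map (\<lambda>b. b + sd A x) ys" by auto
    have "length w = n + m" using x ys w unfolding SSet_def CP_def by auto
    moreover have "\<forall>v\<in>set w. v - sd A x \<in> A" using sd_prop[OF x] ys w unfolding CP_def by auto
    ultimately show "w \<in> SSet A (n + m)" using sd_prop[OF x] unfolding SSet_def by blast
  qed
  have "Sk n A * card A ^ m = card (SSet A n \<times> CP A m)"
    by (simp add: Sk_eq card_cartesian_product card_CP assms)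
  also have "\<dots> = card (?f ` (SSet A n \<times> CP A m))" using card_image[OF inj] by simp
  also have "\<dots> \<le> card (SSet A (n + m))" by (rule card_mono[OF finite_SSet[OF assms] sub])
  finally show ?thesis by (simp add: Sk_eq)
qed

lemma D_upper: assumes "finite A" shows "Dk (n + m) A \<le> Dk n A * Dk m A"
proof -
  let ?f = "\<lambda>w. (take n w, drop n w)"
  have inj: "inj_on ?f (DSet A (n + m))"
    by (rule inj_onI) (metis append_take_drop_id prod.inject)
  have sub: "?f ` DSet A (n + m) \<subseteq> DSet A n \<times> DSet A m"
    unfolding DSet_def by (auto dest: in_set_takeD in_set_dropD)
  have "card (DSet A (n + m)) = card (?f ` DSet A (n + m))" using card_image[OF inj] by simp
  also have "\<dots> \<le> card (DSet A n \<times> DSet A m)"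
    by (rule card_mono[OF _ sub]) (simp add: finite_DSet assms)
  finally show ?thesis by (simp add: Dk_eq card_cartesian_product)
qed

lemma S_upper1: assumes "finite A" shows "Sk (n + m) A \<le> Sk n A * Sk m A"
proof -
  let ?f = "\<lambda>w. (take n w, drop n w)"
  have inj: "inj_on ?f (SSet A (n + m))"
    by (rule inj_onI) (metis append_take_drop_id prod.inject)
  have sub: "?f ` SSet A (n + m) \<subseteq> SSet A n \<times> SSet A m"
    unfolding SSet_def by (auto dest: in_set_takeD in_set_dropD)
  have "card (SSet A (n + m)) = card (?f ` SSet A (n + m))" using card_image[OF inj] by simp
  also have "\<dots> \<le> card (SSet A n \<times> SSet A m)"
    by (rule card_mono[OF _ sub]) (simp add: finite_SSet assms)
  finally show ?thesis by (simp add: Sk_eq card_cartesian_product)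
qed

lemma S_upper2: assumes "finite A" "n \<ge> 1" shows "Sk (n + m) A \<le> Sk n A * Dk m A"
proof -
  let ?f = "\<lambda>w. (take n w, map (\<lambda>v. v - hd w) (drop n w))"
  have inj: "inj_on ?f (SSet A (n + m))"
  proof (rule inj_onI)
    fix w z assume w: "w \<in> SSet A (n + m)" and z: "z \<in> SSet A (n + m)" and e: "?f w = ?f z"
    have tk: "take n w = take n z" using e by simp
    have "hd w = hd (take n w)" using assms(2) w unfolding SSet_def
      by (metis One_nat_def Suc_le_eq hd_take le_add1 less_le_trans not_one_le_zero take_eq_Nil)
    moreover have "hd z = hd (take n z)" using assms(2) z unfolding SSet_def
      by (metis One_nat_def Suc_le_eq hd_take le_add1 less_le_trans not_one_le_zero take_eq_Nil)
    ultimately have h: "hd w = hd z" using tk by simp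
    have "map (\<lambda>v. v + hd w) (map (\<lambda>v. v - hd w) (drop n w)) = drop n w" by (simp add: comp_def)
    moreover have "map (\<lambda>v. v + hd z) (map (\<lambda>v. v - hd z) (drop n z)) = drop n z" by (simp add: comp_def)
    ultimately have "drop n w = drop n z" using e h by (metis prod.inject)
    then show "w = z" using tk by (metis append_take_drop_id)
  qed
  have sub: "?f ` SSet A (n + m) \<subseteq> SSet A n \<times> DSet A m"
  proof
    fix p assume "p \<in> ?f ` SSet A (n + m)"
    then obtain w where w: "w \<in> SSet A (n + m)" and p: "p = ?f w" by auto
    obtain a where a: "length w = n + m" "a \<in> A" "\<forall>v\<in>set w. v - a \<in> A"
      using w unfolding SSet_def by auto
    have "w \<noteq> []" using a assms(2) by auto
    then have hw: "hd w - a \<in> A" using a by auto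
    have "take n w \<in> SSet A n" using a unfolding SSet_def by (auto dest: in_set_takeD)
    moreover have "map (\<lambda>v. v - hd w) (drop n w) \<in> DSet A m"
      unfolding DSet_def
    proof (intro CollectI conjI bexI[of _ "hd w - a"])
      show "length (map (\<lambda>v. v - hd w) (drop n w)) = m" using a by simp
      show "\<forall>v\<in>set (map (\<lambda>v. v - hd w) (drop n w)). v + (hd w - a) \<in> A"
        using a by (auto dest: in_set_dropD)
    qed (rule hw)
    ultimately show "p \<in> SSet A n \<times> DSet A m" using p by simp
  qed
  have "card (SSet A (n + m)) = card (?f ` SSet A (n + m))" using card_image[OF inj] by simp
  also have "\<dots> \<le> card (SSet A n \<times> DSet A m)"
    by (rule card_mono[OF _ sub]) (simp add: finite_SSet finite_DSet assms)
  finally show ?thesis by (simp add: Sk_eq Dk_eq card_cartesian_product)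
qed

lemma DS_lower: assumes "finite A" "m \<ge> 1" shows "Dk n A * card A ^ m \<le> Sk (n + m) A"
proof -
  obtain k where k: "m = Suc k" using assms(2) by (cases m) auto
  let ?f = "\<lambda>(x, c, bs). map (\<lambda>v. v + ad A x + c) x @ (ad A x + c) # map (\<lambda>b. b + c) bs"
  let ?g = "\<lambda>w. (let t = w ! n; x = map (\<lambda>v. v - t) (take n w); c = t - ad A x
              in (x, c, map (\<lambda>v. v - c) (drop (Suc n) w)))"
  have inj: "inj_on ?f (DSet A n \<times> A \<times> CP A k)"
  proof (rule inj_on_inverseI[where g = ?g])
    fix p assume "p \<in> DSet A n \<times> A \<times> CP A k"
    then obtain x c bs where p: "p = (x, c, bs)" "length x = n" unfolding DSet_def by auto
    have "map (\<lambda>v. v - (ad A x + c)) (map (\<lambda>v. v + ad A x + c) x) = x"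
      by (simp add: comp_def algebra_simps)
    then show "?g (?f p) = p" using p by (simp add: comp_def nth_append Let_def)
  qed
  have sub: "?f ` (DSet A n \<times> A \<times> CP A k) \<subseteq> SSet A (n + m)"
  proof
    fix w assume "w \<in> ?f ` (DSet A n \<times> A \<times> CP A k)"
    then obtain x c bs where x: "x \<in> DSet A n" and c: "c \<in> A" and bs: "bs \<in> CP A k"
      and w: "w = map (\<lambda>v. v + ad A x + c) x @ (ad A x + c) # map (\<lambda>b. b + c) bs" by auto
    have "length w = n + m" using x bs w k unfolding DSet_def CP_def by auto
    moreover have "\<forall>v\<in>set w. v - c \<in> A" using ad_prop[OF x] bs w unfolding CP_def by auto
    ultimately show "w \<in> SSet A (n + m)" using c unfolding SSet_def by blast
  qed
  have "card A ^ m = card (A \<times> CP A k)"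
    by (simp add: k card_cartesian_product card_CP assms)
  then have "Dk n A * card A ^ m = card (DSet A n \<times> A \<times> CP A k)"
    by (simp add: Dk_eq card_cartesian_product)
  also have "\<dots> = card (?f ` (DSet A n \<times> A \<times> CP A k))" using card_image[OF inj] by simp
  also have "\<dots> \<le> card (SSet A (n + m))" by (rule card_mono[OF finite_SSet[OF assms(1)] sub])
  finally show ?thesis by (simp add: Sk_eq)
qed

theorem proposition11:
  fixes A :: "'a::ab_group_add set" and n m :: nat
  assumes "finite A" and "n \<ge> 1" and "m \<ge> 1"
  shows "Dk n A * card A ^ m \<le> Dk (n + m) A \<and> Dk (n + m) A \<le> Dk n A * Dk m A
       \<and> Sk n A * card A ^ m \<le> Sk (n + m) A
       \<and> Sk (n + m) A \<le> Sk n A * min (Sk m A) (Dk m A)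
       \<and> (m \<ge> 2 \<longrightarrow> Dk n A * card A ^ m \<le> Sk (n + m) A)
       \<and> (m = 1 \<and> n \<ge> 2 \<longrightarrow> Dk (n - 1) A * card A ^ 2 \<le> Sk (n + 1) A)"
proof -
  have m1: "Sk (n + m) A \<le> Sk n A * min (Sk m A) (Dk m A)"
    using S_upper1[OF assms(1)] S_upper2[OF assms(1,2)] by (simp add: min_def)
  have last: "m = 1 \<and> n \<ge> 2 \<longrightarrow> Dk (n - 1) A * card A ^ 2 \<le> Sk (n + 1) A"
  proof
    assume h: "m = 1 \<and> n \<ge> 2"
    have "Dk (n - 1) A * card A ^ 2 \<le> Sk (n - 1 + 2) A" by (rule DS_lower[OF assms(1)]) simp
    moreover have "n - 1 + 2 = n + 1" using h by simp
    ultimately show "Dk (n - 1) A * card A ^ 2 \<le> Sk (n + 1) A" by simp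
  qed
  show ?thesis using D_lower[OF assms(1)] D_upper[OF assms(1)] S_lower[OF assms(1)] m1
      DS_lower[OF assms(1,3)] last by blast
qed

end
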